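(* Let $S\subset\mathbb{R}^n_+$ be compact and convex with $0\in S$ and $\overline{S\cap\mathbb{Q}^n}=S$. Let $f=(f_1,\dots,f_n)\colon\mathbb{C}^\ell\to\mathbb{C}^n$ be a polynomial map with no $f_j$ identically zero, write $f_j(z)=\sum_{\alpha\in\mathbb{N}^\ell}a_{j,\alpha}z^\alpha$, let $I_j=\{\alpha\in\mathbb{N}^\ell\,;\,a_{j,\alpha}\neq0\}$, let $S_j\subset\mathbb{R}^\ell_+$ be the convex hull of $I_j$, and let $S'=\bigcup_{x\in S}(x_1S_1+\cdots+x_nS_n)\subset\mathbb{R}^\ell_+$. Then $S'$ is the smallest compact convex subset $T$ of $\mathbb{R}^\ell_+$ with $0\in T$ for which $f^*\big(\mathcal{P}^S_m(\mathbb{C}^n)\big)\subseteq\mathcal{P}^T_m(\mathbb{C}^\ell)$ for all $m\in\mathbb{N}$.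
   Context: $\mathbb{R}_+=[0,\infty)$, $\mathbb{N}=\{0,1,2,\dots\}$. For a subset $T\subset\mathbb{R}^k_+$ and $m\in\mathbb{N}$, $\mathcal{P}^T_m(\mathbb{C}^k)$ is the space of polynomials $\sum_{\alpha\in(mT)\cap\mathbb{N}^k}a_\alpha z^\alpha$. $f^*p=p\circ f$. Minkowski sums and scalar multiples: $x_jS_j=\{x_js\,;\,s\in S_j\}$. *)

theory Defs
  imports "HOL-Analysis.Analysis"
begin

definition monomial_val :: "complex^'k \<Rightarrow> nat^'k \<Rightarrow> complex" where
  "monomial_val z \<alpha> = (\<Prod>i\<in>UNIV. (z$i) ^ (\<alpha>$i))"

definition mi_real :: "nat^'k \<Rightarrow> real^'k" where
  "mi_real \<alpha> = (\<chi> i. real (\<alpha>$i))"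

definition nonneg_orthant :: "(real^'k) set" where
  "nonneg_orthant = {x. \<forall>i. 0 \<le> x$i}"

definition rat_points :: "(real^'k) set" where
  "rat_points = {x. \<forall>i. x$i \<in> \<rat>}"

definition poly_fun :: "(nat^'k \<Rightarrow> complex) \<Rightarrow> complex^'k \<Rightarrow> complex" where
  "poly_fun c z = (\<Sum>\<alpha>\<in>{\<alpha>. c \<alpha> \<noteq> 0}. c \<alpha> * monomial_val z \<alpha>)"

definition poly_space :: "(real^'k) set \<Rightarrow> nat \<Rightarrow> (complex^'k \<Rightarrow> complex) set" where
  "poly_space T m = {p. \<exists>c. finite {\<alpha>. c \<alpha> \<noteq> 0}
      \<and> (\<forall>\<alpha>. c \<alpha> \<noteq> 0 \<longrightarrow> mi_real \<alpha> \<in> (\<lambda>x. real m *\<^sub>R x) ` T)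
      \<and> p = poly_fun c}"

definition poly_map :: "('n \<Rightarrow> nat^'l \<Rightarrow> complex) \<Rightarrow> complex^'l \<Rightarrow> complex^'n" where
  "poly_map a z = (\<chi> j. poly_fun (a j) z)"

definition newton_poly :: "(nat^'l \<Rightarrow> complex) \<Rightarrow> (real^'l) set" where
  "newton_poly c = convex hull (mi_real ` {\<alpha>. c \<alpha> \<noteq> 0})"

definition pullback_set :: "(real^'n) set \<Rightarrow> ('n \<Rightarrow> nat^'l \<Rightarrow> complex) \<Rightarrow> (real^'l) set" where
  "pullback_set S a = (\<Union>x\<in>S. {(\<Sum>j\<in>UNIV. x$j *\<^sub>R s j) | s. \<forall>j. s j \<in> newton_poly (a j)})"

end

theory Submission
  imports Defs
begin


lemma exposed_extreme:
  fixes Q :: "'a::euclidean_space set"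
  assumes "finite Q" "e extreme_point_of convex hull Q"
  shows "\<exists>v. \<forall>y\<in>convex hull Q. y \<noteq> e \<longrightarrow> v \<bullet> y < v \<bullet> e"
proof -
  have "polyhedron (convex hull Q)"
    using assms(1) polytope_def polytope_imp_polyhedron by blast
  moreover have "{e} face_of convex hull Q" using assms(2) face_of_singleton by blast
  ultimately have "{e} exposed_face_of convex hull Q" using exposed_face_of_polyhedron by blast
  then obtain v b where vb: "convex hull Q \<subseteq> {x. v \<bullet> x \<le> b}" "{e} = convex hull Q \<inter> {x. v \<bullet> x = b}"
    unfolding exposed_face_of_def by blast
  show ?thesis
  proof (intro exI ballI impI)
    fix y assume y: "y \<in> convex hull Q" "y \<noteq> e"
    have "v \<bullet> e = b" using vb(2) by blast
    moreover have "v \<bullet> y \<le> b" using vb(1) y(1) by blast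
    moreover have "v \<bullet> y \<noteq> b" using vb(2) y by blast
    ultimately show "v \<bullet> y < v \<bullet> e" by linarith
  qed
qed

definition PF :: "(nat^'k) set \<Rightarrow> (complex^'k \<Rightarrow> complex) set" where
  "PF A = {p. \<exists>c. finite {\<alpha>. c \<alpha> \<noteq> 0} \<and> {\<alpha>. c \<alpha> \<noteq> 0} \<subseteq> A \<and> p = poly_fun c}"

lemma poly_fun_superset:
  assumes "finite U" "{\<alpha>. c \<alpha> \<noteq> 0} \<subseteq> U"
  shows "poly_fun c z = (\<Sum>\<alpha>\<in>U. c \<alpha> * monomial_val z \<alpha>)"
  unfolding poly_fun_def by (rule sum.mono_neutral_left) (use assms in auto)

lemma PF_group:
  assumes "finite X" "\<And>x. x \<in> X \<Longrightarrow> \<phi> x \<in> A"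
  shows "(\<lambda>z. \<Sum>x\<in>X. h x * monomial_val z (\<phi> x)) \<in> PF A"
proof -
  define c where "c \<gamma> = (\<Sum>x\<in>{x\<in>X. \<phi> x = \<gamma>}. h x)" for \<gamma>
  have sub: "{\<gamma>. c \<gamma> \<noteq> 0} \<subseteq> \<phi> ` X"
  proof
    fix \<gamma> assume "\<gamma> \<in> {\<gamma>. c \<gamma> \<noteq> 0}"
    then have "{x\<in>X. \<phi> x = \<gamma>} \<noteq> {}" unfolding c_def by (cases "{x\<in>X. \<phi> x = \<gamma>} = {}") auto
    then show "\<gamma> \<in> \<phi> ` X" by blast
  qed
  have fin: "finite {\<gamma>. c \<gamma> \<noteq> 0}" using sub assms(1) finite_subset by blast
  have "poly_fun c z = (\<Sum>x\<in>X. h x * monomial_val z (\<phi> x))" for z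
  proof -
    have "poly_fun c z = (\<Sum>\<gamma>\<in>\<phi> ` X. c \<gamma> * monomial_val z \<gamma>)"
      by (rule poly_fun_superset) (use assms(1) sub in auto)
    also have "\<dots> = (\<Sum>\<gamma>\<in>\<phi> ` X. \<Sum>x\<in>{x\<in>X. \<phi> x = \<gamma>}. h x * monomial_val z (\<phi> x))"
      unfolding c_def sum_distrib_right by (intro sum.cong) auto
    also have "\<dots> = (\<Sum>x\<in>X. h x * monomial_val z (\<phi> x))"
      by (rule sum.image_gen[symmetric]) (rule assms(1))
    finally show ?thesis .
  qed
  then show ?thesis unfolding PF_def using fin sub assms(2) by (auto intro!: exI[of _ c])
qed

lemma monomial_val_add: "monomial_val z (\<alpha> + \<beta>) = monomial_val z \<alpha> * monomial_val z \<beta>"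
  unfolding monomial_val_def by (simp add: power_add prod.distrib)

lemma monomial_val_zero: "monomial_val z 0 = 1"
  unfolding monomial_val_def by simp

lemma PF_mono: "A \<subseteq> B \<Longrightarrow> PF A \<subseteq> PF B"
  unfolding PF_def by blast

lemma PF_mult:
  assumes "f \<in> PF A" "g \<in> PF B"
  shows "(\<lambda>z. f z * g z) \<in> PF {\<alpha> + \<beta> | \<alpha> \<beta>. \<alpha> \<in> A \<and> \<beta> \<in> B}"
proof -
  obtain c where c: "finite {\<alpha>. c \<alpha> \<noteq> 0}" "{\<alpha>. c \<alpha> \<noteq> 0} \<subseteq> A" "f = poly_fun c"
    using assms(1) unfolding PF_def by blast
  obtain d where d: "finite {\<alpha>. d \<alpha> \<noteq> 0}" "{\<alpha>. d \<alpha> \<noteq> 0} \<subseteq> B" "g = poly_fun d"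
    using assms(2) unfolding PF_def by blast
  let ?X = "{\<alpha>. c \<alpha> \<noteq> 0} \<times> {\<alpha>. d \<alpha> \<noteq> 0}"
  have "(\<lambda>z. \<Sum>x\<in>?X. (c (fst x) * d (snd x)) * monomial_val z (fst x + snd x))
      \<in> PF {\<alpha> + \<beta> | \<alpha> \<beta>. \<alpha> \<in> A \<and> \<beta> \<in> B}"
  proof (rule PF_group)
    fix x assume "x \<in> ?X"
    then have "fst x \<in> A" "snd x \<in> B" using c(2) d(2) by auto
    then show "fst x + snd x \<in> {\<alpha> + \<beta> | \<alpha> \<beta>. \<alpha> \<in> A \<and> \<beta> \<in> B}" by blast
  qed (use c d in auto)
  moreover have "(\<lambda>z. f z * g z) = (\<lambda>z. \<Sum>x\<in>?X. (c (fst x) * d (snd x)) * monomial_val z (fst x + snd x))"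
  proof
    fix z
    have "f z * g z = (\<Sum>\<alpha>\<in>{\<alpha>. c \<alpha> \<noteq> 0}. c \<alpha> * monomial_val z \<alpha>) * (\<Sum>\<beta>\<in>{\<alpha>. d \<alpha> \<noteq> 0}. d \<beta> * monomial_val z \<beta>)"
      using c d unfolding poly_fun_def by simp
    also have "\<dots> = (\<Sum>\<alpha>\<in>{\<alpha>. c \<alpha> \<noteq> 0}. \<Sum>\<beta>\<in>{\<alpha>. d \<alpha> \<noteq> 0}. (c \<alpha> * monomial_val z \<alpha>) * (d \<beta> * monomial_val z \<beta>))"
      by (simp add: sum_product)
    also have "\<dots> = (\<Sum>x\<in>?X. (c (fst x) * d (snd x)) * monomial_val z (fst x + snd x))"
      by (simp add: sum.cartesian_product monomial_val_add mult_ac split_beta)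
    finally show "f z * g z = (\<Sum>x\<in>?X. (c (fst x) * d (snd x)) * monomial_val z (fst x + snd x))" .
  qed
  ultimately show ?thesis by simp
qed

lemma PF_const: "(\<lambda>z. k) \<in> PF {0}"
proof -
  have "(\<lambda>z. \<Sum>x\<in>{0}. k * monomial_val z x) \<in> PF {0}"
    by (rule PF_group) auto
  then show ?thesis by (simp add: monomial_val_zero)
qed

lemma PF_zero: "(\<lambda>z. 0) \<in> PF A"
proof -
  have "(\<lambda>z. \<Sum>x\<in>{}. 0 * monomial_val z x) \<in> PF A"
    by (rule PF_group) auto
  then show ?thesis by simp
qed

lemma PF_add:
  assumes "f \<in> PF A" "g \<in> PF A"
  shows "(\<lambda>z. f z + g z) \<in> PF A"
proof -
  obtain c where c: "finite {\<alpha>. c \<alpha> \<noteq> 0}" "{\<alpha>. c \<alpha> \<noteq> 0} \<subseteq> A" "f = poly_fun c"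
    using assms(1) unfolding PF_def by blast
  obtain d where d: "finite {\<alpha>. d \<alpha> \<noteq> 0}" "{\<alpha>. d \<alpha> \<noteq> 0} \<subseteq> A" "g = poly_fun d"
    using assms(2) unfolding PF_def by blast
  let ?U = "{\<alpha>. c \<alpha> \<noteq> 0} \<union> {\<alpha>. d \<alpha> \<noteq> 0}"
  have "(\<lambda>z. \<Sum>x\<in>?U. (c x + d x) * monomial_val z x) \<in> PF A"
    by (rule PF_group) (use c d in auto)
  moreover have "f z + g z = (\<Sum>x\<in>?U. (c x + d x) * monomial_val z x)" for z
    using c d by (simp add: poly_fun_superset[of ?U] distrib_right sum.distrib)
  ultimately show ?thesis by simp
qed

lemma PF_scale:
  assumes "f \<in> PF A"
  shows "(\<lambda>z. k * f z) \<in> PF A"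
proof -
  obtain c where c: "finite {\<alpha>. c \<alpha> \<noteq> 0}" "{\<alpha>. c \<alpha> \<noteq> 0} \<subseteq> A" "f = poly_fun c"
    using assms(1) unfolding PF_def by blast
  have "(\<lambda>z. \<Sum>x\<in>{\<alpha>. c \<alpha> \<noteq> 0}. (k * c x) * monomial_val z x) \<in> PF A"
    by (rule PF_group) (use c in auto)
  moreover have "k * f z = (\<Sum>x\<in>{\<alpha>. c \<alpha> \<noteq> 0}. (k * c x) * monomial_val z x)" for z
    using c by (simp add: poly_fun_def sum_distrib_left mult.assoc)
  ultimately show ?thesis by simp
qed

lemma PF_sum:
  assumes "finite X" "\<And>x. x \<in> X \<Longrightarrow> F x \<in> PF A"
  shows "(\<lambda>z. \<Sum>x\<in>X. F x z) \<in> PF A"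
  using assms
proof (induction X rule: finite_induct)
  case empty
  then show ?case using PF_zero by simp
next
  case (insert x X)
  then show ?case using PF_add[of "F x" A "\<lambda>z. \<Sum>x\<in>X. F x z"] by simp
qed



definition zt :: "real^'k \<Rightarrow> real \<Rightarrow> complex^'k" where
  "zt v t = (\<chi> i. complex_of_real (t powr (v$i)))"

lemma mv_zt:
  assumes "t > 0"
  shows "monomial_val (zt v t) \<alpha> = complex_of_real (t powr (v \<bullet> mi_real \<alpha>))"
proof -
  have "monomial_val (zt v t) \<alpha> = complex_of_real (\<Prod>i\<in>UNIV. (t powr (v$i)) ^ (\<alpha>$i))"
    unfolding monomial_val_def zt_def by simp
  also have "(\<Prod>i\<in>UNIV. (t powr (v$i)) ^ (\<alpha>$i)) = (\<Prod>i\<in>UNIV. t powr (v$i * real (\<alpha>$i)))"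
    using assms by (intro prod.cong) (auto simp: powr_power mult.commute)
  also have "\<dots> = t powr (\<Sum>i\<in>UNIV. v$i * real (\<alpha>$i))"
    using assms by (simp add: powr_sum)
  also have "(\<Sum>i\<in>UNIV. v$i * real (\<alpha>$i)) = v \<bullet> mi_real \<alpha>"
    unfolding inner_vec_def mi_real_def by simp
  finally show ?thesis .
qed

lemma mi_real_inj: "mi_real \<alpha> = mi_real \<beta> \<Longrightarrow> \<alpha> = \<beta>"
  unfolding mi_real_def by (simp add: vec_eq_iff)

lemma mi_real_add: "mi_real (\<alpha> + \<beta>) = mi_real \<alpha> + mi_real \<beta>"
  unfolding mi_real_def by (simp add: vec_eq_iff)

lemma mi_real_zero: "mi_real 0 = 0"
  unfolding mi_real_def by (simp add: vec_eq_iff)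

lemma asym_lemma:
  fixes v :: "real^'k" and F :: "(nat^'k) set"
  assumes "finite F" "\<epsilon> \<in> F" "\<And>\<alpha>. \<alpha> \<in> F \<Longrightarrow> \<alpha> \<noteq> \<epsilon> \<Longrightarrow> v \<bullet> mi_real \<alpha> < v \<bullet> mi_real \<epsilon>"
  shows "((\<lambda>t. complex_of_real (t powr (- (v \<bullet> mi_real \<epsilon>))) * (\<Sum>\<alpha>\<in>F. c \<alpha> * monomial_val (zt v t) \<alpha>)) \<longlongrightarrow> c \<epsilon>) at_top"
proof -
  define r where "r = v \<bullet> mi_real \<epsilon>"
  have ev: "\<forall>\<^sub>F t in at_top. (\<Sum>\<alpha>\<in>F. c \<alpha> * complex_of_real (t powr (v \<bullet> mi_real \<alpha> - r)))
     = complex_of_real (t powr (- r)) * (\<Sum>\<alpha>\<in>F. c \<alpha> * monomial_val (zt v t) \<alpha>)"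
    using eventually_gt_at_top[of 0]
  proof eventually_elim
    case (elim t)
    have "t powr (v \<bullet> mi_real \<alpha> - r) = t powr (- r) * t powr (v \<bullet> mi_real \<alpha>)" for \<alpha>
      by (simp add: powr_add[symmetric])
    then show ?case using elim by (simp add: mv_zt sum_distrib_left mult_ac)
  qed
  have lim: "((\<lambda>t. \<Sum>\<alpha>\<in>F. c \<alpha> * complex_of_real (t powr (v \<bullet> mi_real \<alpha> - r))) \<longlongrightarrow> (\<Sum>\<alpha>\<in>F. if \<alpha> = \<epsilon> then c \<epsilon> else 0)) at_top"
  proof (rule tendsto_sum)
    fix \<alpha> assume a: "\<alpha> \<in> F"
    show "((\<lambda>t. c \<alpha> * complex_of_real (t powr (v \<bullet> mi_real \<alpha> - r))) \<longlongrightarrow> (if \<alpha> = \<epsilon> then c \<epsilon> else 0)) at_top"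
    proof (cases "\<alpha> = \<epsilon>")
      case True
      have "\<forall>\<^sub>F t in at_top. c \<epsilon> = c \<alpha> * complex_of_real (t powr (v \<bullet> mi_real \<alpha> - r))"
        using eventually_gt_at_top[of 0] by eventually_elim (simp add: True r_def)
      then show ?thesis using True by (simp add: tendsto_eventually)
    next
      case False
      then have neg: "v \<bullet> mi_real \<alpha> - r < 0" using assms(3)[OF a] r_def by simp
      have "((\<lambda>t. t powr (v \<bullet> mi_real \<alpha> - r)) \<longlongrightarrow> 0) at_top"
        by (rule tendsto_neg_powr[OF neg filterlim_ident])
      then have "((\<lambda>t. complex_of_real (t powr (v \<bullet> mi_real \<alpha> - r))) \<longlongrightarrow> 0) at_top"
        using tendsto_of_real by fastforce
      then show ?thesis using False by (simp add: tendsto_mult_right_zero)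
    qed
  qed
  have "(\<Sum>\<alpha>\<in>F. if \<alpha> = \<epsilon> then c \<epsilon> else 0) = c \<epsilon>" using assms(1,2) by simp
  then show ?thesis using Lim_transform_eventually[OF lim ev] r_def by simp
qed

lemma poly_fun_zero_unique:
  fixes c :: "nat^'k \<Rightarrow> complex"
  assumes fin: "finite {\<alpha>. c \<alpha> \<noteq> 0}" and z: "\<And>z. poly_fun c z = 0"
  shows "c \<alpha> = 0"
proof (rule ccontr)
  assume ca: "c \<alpha> \<noteq> 0"
  let ?F = "{\<alpha>. c \<alpha> \<noteq> 0}"
  let ?Q = "mi_real ` ?F"
  have "convex hull ?Q \<noteq> {}" using ca by auto
  moreover have "compact (convex hull ?Q)" using fin by (simp add: finite_imp_compact_convex_hull)
  ultimately obtain e where e: "e extreme_point_of convex hull ?Q"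
    using extreme_point_exists_convex[of "convex hull ?Q"] by auto
  then have "e \<in> ?Q" by (rule extreme_point_of_convex_hull)
  then obtain \<epsilon> where eps: "\<epsilon> \<in> ?F" "e = mi_real \<epsilon>" by blast
  obtain v where v: "\<forall>y\<in>convex hull ?Q. y \<noteq> e \<longrightarrow> v \<bullet> y < v \<bullet> e"
    using exposed_extreme[OF _ e] fin by blast
  have "\<And>\<beta>. \<beta> \<in> ?F \<Longrightarrow> \<beta> \<noteq> \<epsilon> \<Longrightarrow> v \<bullet> mi_real \<beta> < v \<bullet> mi_real \<epsilon>"
  proof -
    fix \<beta> assume b: "\<beta> \<in> ?F" "\<beta> \<noteq> \<epsilon>"
    then have "mi_real \<beta> \<in> convex hull ?Q" by (simp add: hull_inc)
    moreover have "mi_real \<beta> \<noteq> e" using b eps mi_real_inj by blast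
    ultimately show "v \<bullet> mi_real \<beta> < v \<bullet> mi_real \<epsilon>" using v eps by blast
  qed
  from asym_lemma[OF fin eps(1) this, of c]
  have "((\<lambda>t. complex_of_real (t powr (- (v \<bullet> mi_real \<epsilon>))) * poly_fun c (zt v t)) \<longlongrightarrow> c \<epsilon>) at_top"
    unfolding poly_fun_def .
  then have "((\<lambda>t::real. 0) \<longlongrightarrow> c \<epsilon>) at_top" using z by simp
  then have "c \<epsilon> = 0" using tendsto_unique[OF trivial_limit_at_top_linorder _ tendsto_const] by metis
  then show False using eps by simp
qed

lemma poly_fun_unique:
  fixes c d :: "nat^'k \<Rightarrow> complex"
  assumes "finite {\<alpha>. c \<alpha> \<noteq> 0}" "finite {\<alpha>. d \<alpha> \<noteq> 0}" "\<And>z. poly_fun c z = poly_fun d z"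
  shows "c = d"
proof -
  let ?U = "{\<alpha>. c \<alpha> \<noteq> 0} \<union> {\<alpha>. d \<alpha> \<noteq> 0}"
  define e where "e \<alpha> = c \<alpha> - d \<alpha>" for \<alpha>
  have sub: "{\<alpha>. e \<alpha> \<noteq> 0} \<subseteq> ?U" unfolding e_def by auto
  have fin: "finite {\<alpha>. e \<alpha> \<noteq> 0}" using sub assms(1,2) finite_subset by blast
  have "poly_fun e z = 0" for z
  proof -
    have "poly_fun e z = (\<Sum>x\<in>?U. e x * monomial_val z x)"
      using sub assms by (intro poly_fun_superset) auto
    also have "\<dots> = poly_fun c z - poly_fun d z"
      using assms by (simp add: poly_fun_superset[of ?U] e_def left_diff_distrib sum_subtractf)
    finally show ?thesis using assms(3) by simp
  qed
  then have "e \<alpha> = 0" for \<alpha> using poly_fun_zero_unique[OF fin] by blast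
  then show ?thesis unfolding e_def by (auto simp: fun_eq_iff)
qed



definition msum :: "'n set \<Rightarrow> ('n \<Rightarrow> real) \<Rightarrow> ('n \<Rightarrow> 'v::real_vector set) \<Rightarrow> 'v set" where
  "msum J x A = {(\<Sum>j\<in>J. x j *\<^sub>R s j) | s. \<forall>j\<in>J. s j \<in> A j}"

lemma msum_insert:
  assumes "finite J" "i \<notin> J"
  shows "y \<in> msum (insert i J) x A \<longleftrightarrow> (\<exists>a r. a \<in> A i \<and> r \<in> msum J x A \<and> y = x i *\<^sub>R a + r)"
proof
  assume "y \<in> msum (insert i J) x A"
  then obtain s where s: "\<forall>j\<in>insert i J. s j \<in> A j" "y = (\<Sum>j\<in>insert i J. x j *\<^sub>R s j)"
    unfolding msum_def by blast
  then have "y = x i *\<^sub>R s i + (\<Sum>j\<in>J. x j *\<^sub>R s j)" using assms by simp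
  moreover have "(\<Sum>j\<in>J. x j *\<^sub>R s j) \<in> msum J x A" unfolding msum_def using s by auto
  ultimately show "\<exists>a r. a \<in> A i \<and> r \<in> msum J x A \<and> y = x i *\<^sub>R a + r" using s by auto
next
  assume "\<exists>a r. a \<in> A i \<and> r \<in> msum J x A \<and> y = x i *\<^sub>R a + r"
  then obtain a t where at: "a \<in> A i" "\<forall>j\<in>J. t j \<in> A j" "y = x i *\<^sub>R a + (\<Sum>j\<in>J. x j *\<^sub>R t j)"
    unfolding msum_def by blast
  define s where "s = t(i := a)"
  have "(\<Sum>j\<in>J. x j *\<^sub>R s j) = (\<Sum>j\<in>J. x j *\<^sub>R t j)"
    using assms(2) unfolding s_def by (intro sum.cong) auto
  then have "y = (\<Sum>j\<in>insert i J. x j *\<^sub>R s j)" using assms at by (simp add: s_def)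
  moreover have "\<forall>j\<in>insert i J. s j \<in> A j" using at unfolding s_def by auto
  ultimately show "y \<in> msum (insert i J) x A" unfolding msum_def by blast
qed

lemma msum_empty: "msum {} x A = {0}"
  unfolding msum_def by auto

lemma hull_msum:
  fixes A :: "'n \<Rightarrow> 'v::real_vector set"
  assumes "finite J"
  shows "msum J x (\<lambda>j. convex hull A j) \<subseteq> convex hull (msum J x A)"
  using assms
proof (induction J rule: finite_induct)
  case empty
  then show ?case by (simp add: msum_empty)
next
  case (insert i J)
  show ?case
  proof
    fix y assume "y \<in> msum (insert i J) x (\<lambda>j. convex hull A j)"
    then obtain a r where ar: "a \<in> convex hull A i" "r \<in> msum J x (\<lambda>j. convex hull A j)" "y = x i *\<^sub>R a + r"
      using msum_insert[OF insert(1,2), of y x "\<lambda>j. convex hull A j"] by blast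
    have "x i *\<^sub>R a \<in> convex hull ((\<lambda>v. x i *\<^sub>R v) ` A i)"
      unfolding convex_hull_scaling using ar(1) by (rule imageI)
    moreover have "r \<in> convex hull (msum J x A)" using insert(3) ar(2) by blast
    ultimately have "y \<in> convex hull ((\<lambda>v. x i *\<^sub>R v) ` A i) + convex hull (msum J x A)"
      unfolding ar(3) by (rule set_plus_intro)
    then have yin: "y \<in> convex hull ((\<lambda>v. x i *\<^sub>R v) ` A i + msum J x A)"
      by (simp add: convex_hull_set_plus)
    have sub: "(\<lambda>v. x i *\<^sub>R v) ` A i + msum J x A \<subseteq> msum (insert i J) x A"
    proof
      fix w assume "w \<in> (\<lambda>v. x i *\<^sub>R v) ` A i + msum J x A"
      then obtain b' r' where br: "b' \<in> (\<lambda>v. x i *\<^sub>R v) ` A i" "r' \<in> msum J x A" "w = b' + r'"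
        by (rule set_plus_elim) blast
      then obtain a' where "a' \<in> A i" "b' = x i *\<^sub>R a'" by blast
      then have "a' \<in> A i" "r' \<in> msum J x A" "w = x i *\<^sub>R a' + r'" using br by auto
      then show "w \<in> msum (insert i J) x A" using msum_insert[OF insert(1,2), of w x A] by blast
    qed
    show "y \<in> convex hull msum (insert i J) x A"
      using yin hull_mono[OF sub, of convex] by blast
  qed
qed

lemma mi_real_eq0: "{\<alpha>. mi_real \<alpha> = 0} = {0}"
  by (auto simp: mi_real_def vec_eq_iff)

abbreviation RR :: "(real^'k) set \<Rightarrow> (nat^'k) set" where
  "RR C \<equiv> {\<alpha>. mi_real \<alpha> \<in> C}"

lemma PF_power:
  assumes "convex C" "C \<noteq> {}" "f \<in> PF (RR C)"
  shows "(\<lambda>z. f z ^ k) \<in> PF (RR ((\<lambda>x. real k *\<^sub>R x) ` C))"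
proof (induction k)
  case 0
  obtain c where "c \<in> C" using assms(2) by blast
  then have "{0} \<subseteq> RR ((\<lambda>x. real 0 *\<^sub>R x) ` C)" by (auto simp: mi_real_zero image_iff)
  then show ?case using PF_const[of 1] PF_mono[OF \<open>{0} \<subseteq> _\<close>] by auto
next
  case (Suc k)
  have m: "(\<lambda>z. f z * f z ^ k) \<in> PF {\<alpha> + \<beta> | \<alpha> \<beta>. \<alpha> \<in> RR C \<and> \<beta> \<in> RR ((\<lambda>x. real k *\<^sub>R x) ` C)}"
    by (rule PF_mult[OF assms(3) Suc])
  have sub: "{\<alpha> + \<beta> | \<alpha> \<beta>. \<alpha> \<in> RR C \<and> \<beta> \<in> RR ((\<lambda>x. real k *\<^sub>R x) ` C)} \<subseteq> RR ((\<lambda>x. real (Suc k) *\<^sub>R x) ` C)"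
  proof
    fix \<gamma> assume "\<gamma> \<in> {\<alpha> + \<beta> | \<alpha> \<beta>. \<alpha> \<in> RR C \<and> \<beta> \<in> RR ((\<lambda>x. real k *\<^sub>R x) ` C)}"
    then obtain \<alpha> \<beta> c1 c2 where ab: "\<gamma> = \<alpha> + \<beta>" "c1 \<in> C" "c2 \<in> C" "mi_real \<alpha> = c1" "mi_real \<beta> = real k *\<^sub>R c2"
      by blast
    define u where "u = inverse (real (Suc k))"
    have u: "0 \<le> u" "0 \<le> 1 - u" "u \<le> 1" unfolding u_def by (auto simp: field_simps)
    have "u *\<^sub>R c1 + (1 - u) *\<^sub>R c2 \<in> C" using assms(1) ab(2,3) u by (simp add: convex_def)
    moreover have "mi_real \<gamma> = real (Suc k) *\<^sub>R (u *\<^sub>R c1 + (1 - u) *\<^sub>R c2)"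
    proof -
      have "real (Suc k) * u = 1" unfolding u_def by simp
      moreover have "real (Suc k) * (1 - u) = real k" unfolding u_def by (simp add: field_simps)
      ultimately show ?thesis using ab by (simp add: mi_real_add scaleR_add_right)
    qed
    ultimately show "\<gamma> \<in> RR ((\<lambda>x. real (Suc k) *\<^sub>R x) ` C)" by blast
  qed
  show ?case using m PF_mono[OF sub] by auto
qed

lemma PF_prod:
  assumes "finite J" "\<And>j. convex (C j)" "\<And>j. C j \<noteq> {}" "\<And>j. f j \<in> PF (RR (C j))"
  shows "(\<lambda>z. \<Prod>j\<in>J. f j z ^ \<beta> j) \<in> PF (RR (msum J (\<lambda>j. real (\<beta> j)) C))"
  using assms(1)
proof (induction J rule: finite_induct)
  case empty
  show ?case using PF_const[of 1] by (simp add: msum_empty mi_real_eq0)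
next
  case (insert i J)
  have m: "(\<lambda>z. f i z ^ \<beta> i * (\<Prod>j\<in>J. f j z ^ \<beta> j)) \<in> PF {\<alpha> + \<gamma> | \<alpha> \<gamma>. \<alpha> \<in> RR ((\<lambda>x. real (\<beta> i) *\<^sub>R x) ` C i) \<and> \<gamma> \<in> RR (msum J (\<lambda>j. real (\<beta> j)) C)}"
    by (rule PF_mult[OF PF_power[OF assms(2,3,4)] insert(3)])
  have sub: "{\<alpha> + \<gamma> | \<alpha> \<gamma>. \<alpha> \<in> RR ((\<lambda>x. real (\<beta> i) *\<^sub>R x) ` C i) \<and> \<gamma> \<in> RR (msum J (\<lambda>j. real (\<beta> j)) C)}
     \<subseteq> RR (msum (insert i J) (\<lambda>j. real (\<beta> j)) C)"
  proof
    fix \<delta> assume "\<delta> \<in> {\<alpha> + \<gamma> | \<alpha> \<gamma>. \<alpha> \<in> RR ((\<lambda>x. real (\<beta> i) *\<^sub>R x) ` C i) \<and> \<gamma> \<in> RR (msum J (\<lambda>j. real (\<beta> j)) C)}"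
    then obtain \<alpha> \<gamma> c where ag: "\<delta> = \<alpha> + \<gamma>" "c \<in> C i" "mi_real \<alpha> = real (\<beta> i) *\<^sub>R c" "mi_real \<gamma> \<in> msum J (\<lambda>j. real (\<beta> j)) C"
      by blast
    then have "mi_real \<delta> \<in> msum (insert i J) (\<lambda>j. real (\<beta> j)) C"
      using msum_insert[OF insert(1,2), of "mi_real \<delta>" "\<lambda>j. real (\<beta> j)" C] by (auto simp add: mi_real_add)
    then show "\<delta> \<in> RR (msum (insert i J) (\<lambda>j. real (\<beta> j)) C)" by simp
  qed
  show ?case using m PF_mono[OF sub] insert(1,2) by auto
qed



lemma main_lemma:
  fixes a :: "'n::finite \<Rightarrow> nat^'l \<Rightarrow> complex" and \<beta> :: "nat^'n" and C :: "(real^'l) set"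
  assumes fin: "\<And>j. finite {\<alpha>. a j \<alpha> \<noteq> 0}" and ne: "\<And>j. {\<alpha>. a j \<alpha> \<noteq> 0} \<noteq> {}"
    and Cc: "convex C"
    and Pg: "(\<lambda>z. \<Prod>j\<in>UNIV. poly_fun (a j) z ^ (\<beta>$j)) \<in> PF (RR C)"
  shows "msum UNIV (\<lambda>j. real (\<beta>$j)) (\<lambda>j. newton_poly (a j)) \<subseteq> C"
proof -
  let ?I = "\<lambda>j. {\<alpha>. a j \<alpha> \<noteq> 0}"
  let ?N = "\<lambda>j. newton_poly (a j)"
  let ?b = "\<lambda>j. real (\<beta>$j)"
  define K where "K = msum UNIV ?b ?N"
  define P where "P = msum UNIV ?b (\<lambda>j. mi_real ` ?I j)"
  define g where "g = (\<lambda>z. \<Prod>j\<in>UNIV. poly_fun (a j) z ^ (\<beta>$j))"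
  have fj: "poly_fun (a j) \<in> PF (RR (?N j))" for j
    unfolding PF_def newton_poly_def using fin[of j] by (auto intro!: exI[of _ "a j"] hull_inc)
  have Nconv: "convex (?N j)" for j unfolding newton_poly_def by simp
  have Nne: "?N j \<noteq> {}" for j unfolding newton_poly_def using ne[of j] by simp
  have "g \<in> PF (RR K)" unfolding g_def K_def by (rule PF_prod[OF _ Nconv Nne fj]) simp
  then obtain d where d: "finite {\<alpha>. d \<alpha> \<noteq> 0}" "{\<alpha>. d \<alpha> \<noteq> 0} \<subseteq> RR K" "g = poly_fun d"
    unfolding PF_def by blast
  obtain c where c: "finite {\<alpha>. c \<alpha> \<noteq> 0}" "{\<alpha>. c \<alpha> \<noteq> 0} \<subseteq> RR C" "g = poly_fun c"
    using Pg unfolding PF_def g_def by blast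
  have cd: "c = d" using poly_fun_unique[OF c(1) d(1)] c(3) d(3) by metis
  have finP: "finite P"
  proof -
    have "P \<subseteq> (\<lambda>s. \<Sum>j\<in>UNIV. ?b j *\<^sub>R s j) ` (Pi\<^sub>E UNIV (\<lambda>j. mi_real ` ?I j))"
      unfolding P_def msum_def PiE_UNIV_domain by auto
    moreover have "finite (Pi\<^sub>E UNIV (\<lambda>j. mi_real ` ?I j))"
      by (rule finite_PiE) (use fin in auto)
    ultimately show ?thesis using finite_subset by blast
  qed
  have KP: "K \<subseteq> convex hull P"
    unfolding K_def P_def newton_poly_def by (rule hull_msum) simp
  have "convex hull P \<subseteq> C"
  proof -
    have KM: "convex hull P = convex hull {e. e extreme_point_of convex hull P}"
      by (rule Krein_Milman_Minkowski) (simp_all add: finP finite_imp_compact_convex_hull)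
    have "{e. e extreme_point_of convex hull P} \<subseteq> C"
    proof
      fix e assume "e \<in> {e. e extreme_point_of convex hull P}"
      then have ext: "e extreme_point_of convex hull P" by simp
      then have eP: "e \<in> P" by (rule extreme_point_of_convex_hull)
      obtain v where v: "\<forall>y\<in>convex hull P. y \<noteq> e \<longrightarrow> v \<bullet> y < v \<bullet> e"
        using exposed_extreme[OF finP ext] by blast
      obtain s where s: "\<forall>j. s j \<in> mi_real ` ?I j" "e = (\<Sum>j\<in>UNIV. ?b j *\<^sub>R s j)"
        using eP unfolding P_def msum_def by blast
      have "\<forall>j. \<exists>\<alpha>. \<alpha> \<in> ?I j \<and> s j = mi_real \<alpha>" using s(1) by blast
      then obtain \<alpha> where \<alpha>: "\<forall>j. \<alpha> j \<in> ?I j \<and> s j = mi_real (\<alpha> j)" by metis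
      have \<alpha>1: "\<And>j. \<alpha> j \<in> ?I j" and \<alpha>2: "\<And>j. s j = mi_real (\<alpha> j)" using \<alpha> by auto
      define \<epsilon> where "\<epsilon> = (\<chi> i. \<Sum>j\<in>UNIV. \<beta>$j * \<alpha> j $ i)"
      have eps: "mi_real \<epsilon> = e"
        unfolding s(2) \<epsilon>_def by (simp add: vec_eq_iff \<alpha>2 mi_real_def)
      let ?F = "insert \<epsilon> {\<alpha>. d \<alpha> \<noteq> 0}"
      have finF: "finite ?F" using d(1) by simp
      have Fmax: "v \<bullet> mi_real \<gamma> < v \<bullet> mi_real \<epsilon>" if "\<gamma> \<in> ?F" "\<gamma> \<noteq> \<epsilon>" for \<gamma>
      proof -
        have "mi_real \<gamma> \<in> convex hull P" using that d(2) KP by auto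
        moreover have "mi_real \<gamma> \<noteq> e" using eps \<open>\<gamma> \<noteq> \<epsilon>\<close> mi_real_inj by metis
        ultimately show "v \<bullet> mi_real \<gamma> < v \<bullet> mi_real \<epsilon>" using v eps by blast
      qed
      have lim1: "((\<lambda>t. complex_of_real (t powr (- (v \<bullet> mi_real \<epsilon>))) * g (zt v t)) \<longlongrightarrow> d \<epsilon>) at_top"
      proof -
        have "g z = (\<Sum>\<gamma>\<in>?F. d \<gamma> * monomial_val z \<gamma>)" for z
          unfolding d(3) by (rule poly_fun_superset) (use finF in auto)
        then show ?thesis using asym_lemma[OF finF _ Fmax, of d] by simp
      qed
      define M where "M j = v \<bullet> mi_real (\<alpha> j)" for j
      have r: "v \<bullet> mi_real \<epsilon> = (\<Sum>j\<in>UNIV. real (\<beta>$j) * M j)"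
        unfolding eps s(2) M_def by (simp add: inner_sum_right \<alpha>2)
      have uniq: "v \<bullet> mi_real \<alpha>' < M j" if j: "\<beta>$j > 0" "\<alpha>' \<in> ?I j" "\<alpha>' \<noteq> \<alpha> j" for j \<alpha>'
      proof -
        define s' where "s' = s(j := mi_real \<alpha>')"
        define e' where "e' = (\<Sum>i\<in>UNIV. ?b i *\<^sub>R s' i)"
        have "e' \<in> P" unfolding P_def msum_def e'_def s'_def using s(1) j(2) by auto
        then have e'h: "e' \<in> convex hull P" by (simp add: hull_inc)
        have "e' - e = (\<Sum>i\<in>UNIV. ?b i *\<^sub>R (s' i - s i))"
          unfolding e'_def s(2) by (simp add: sum_subtractf scaleR_diff_right)
        also have "\<dots> = (\<Sum>i\<in>UNIV. if i = j then ?b j *\<^sub>R (mi_real \<alpha>' - s j) else 0)"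
          by (rule sum.cong) (auto simp: s'_def)
        also have "\<dots> = ?b j *\<^sub>R (mi_real \<alpha>' - s j)" by simp
        finally have diff: "e' - e = ?b j *\<^sub>R (mi_real \<alpha>' - s j)" .
        have bpos: "?b j > 0" using j(1) by simp
        have "mi_real \<alpha>' \<noteq> s j" using j(3) \<alpha>2 mi_real_inj by metis
        then have "e' \<noteq> e" using diff bpos by auto
        then have "v \<bullet> e' < v \<bullet> e" using v e'h by blast
        then have "v \<bullet> (e' - e) < 0" by (simp add: inner_diff_right)
        then have "?b j * (v \<bullet> mi_real \<alpha>' - M j) < 0"
          unfolding diff M_def \<alpha>2 by (simp add: inner_diff_right)
        then show ?thesis using bpos by (simp add: mult_less_0_iff)
      qed
      have lim_j: "((\<lambda>t. (complex_of_real (t powr (- M j)) * poly_fun (a j) (zt v t)) ^ (\<beta>$j)) \<longlongrightarrow> a j (\<alpha> j) ^ (\<beta>$j)) at_top" for j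
      proof (cases "\<beta>$j = 0")
        case True then show ?thesis by simp
      next
        case False
        then have bj: "\<beta>$j > 0" by simp
        have "((\<lambda>t. complex_of_real (t powr (- (v \<bullet> mi_real (\<alpha> j)))) * (\<Sum>\<gamma>\<in>?I j. a j \<gamma> * monomial_val (zt v t) \<gamma>)) \<longlongrightarrow> a j (\<alpha> j)) at_top"
          by (rule asym_lemma[OF fin \<alpha>1]) (use uniq[OF bj] in \<open>auto simp: M_def\<close>)
        then have "((\<lambda>t. complex_of_real (t powr (- M j)) * poly_fun (a j) (zt v t)) \<longlongrightarrow> a j (\<alpha> j)) at_top"
          unfolding poly_fun_def M_def .
        then show ?thesis by (rule tendsto_power)
      qed
      have lim2: "((\<lambda>t. complex_of_real (t powr (- (v \<bullet> mi_real \<epsilon>))) * g (zt v t)) \<longlongrightarrow> (\<Prod>j\<in>UNIV. a j (\<alpha> j) ^ (\<beta>$j))) at_top"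
      proof -
        have ev: "\<forall>\<^sub>F t in at_top. (\<Prod>j\<in>UNIV. (complex_of_real (t powr (- M j)) * poly_fun (a j) (zt v t)) ^ (\<beta>$j)) = complex_of_real (t powr (- (v \<bullet> mi_real \<epsilon>))) * g (zt v t)"
          using eventually_gt_at_top[of 0]
        proof eventually_elim
          case (elim t)
          have "(\<Prod>j\<in>UNIV. (t powr (- M j)) ^ (\<beta>$j)) = (\<Prod>j\<in>UNIV. t powr (- (real (\<beta>$j) * M j)))"
            using elim by (intro prod.cong) (simp_all add: powr_power)
          also have "\<dots> = t powr (\<Sum>j\<in>UNIV. - (real (\<beta>$j) * M j))" using elim by (simp add: powr_sum)
          also have "\<dots> = t powr (- (v \<bullet> mi_real \<epsilon>))" by (simp add: r sum_negf)
          finally have pw: "(\<Prod>j\<in>UNIV. (t powr (- M j)) ^ (\<beta>$j)) = t powr (- (v \<bullet> mi_real \<epsilon>))" .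
          have "(\<Prod>j\<in>UNIV. (complex_of_real (t powr (- M j)) * poly_fun (a j) (zt v t)) ^ (\<beta>$j))
              = complex_of_real (\<Prod>j\<in>UNIV. (t powr (- M j)) ^ (\<beta>$j)) * g (zt v t)"
            unfolding g_def by (simp add: power_mult_distrib prod.distrib)
          then show ?case using pw by simp
        qed
        show ?thesis using Lim_transform_eventually[OF tendsto_prod[OF lim_j] ev] by simp
      qed
      have "d \<epsilon> = (\<Prod>j\<in>UNIV. a j (\<alpha> j) ^ (\<beta>$j))"
        using tendsto_unique[OF trivial_limit_at_top_linorder lim1 lim2] .
      also have "\<dots> \<noteq> 0" using \<alpha>1 by simp
      finally have "c \<epsilon> \<noteq> 0" using cd by simp
      then have "mi_real \<epsilon> \<in> C" using c(2) by blast
      then show "e \<in> C" using eps by simp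
    qed
    then have "convex hull {e. e extreme_point_of convex hull P} \<subseteq> C"
      by (rule hull_minimal) (rule Cc)
    then show ?thesis using KM by simp
  qed
  then show ?thesis using KP unfolding K_def by blast
qed



lemma pb_iff: "y \<in> pullback_set S a \<longleftrightarrow> (\<exists>x\<in>S. y \<in> msum UNIV (\<lambda>j. x$j) (\<lambda>j. newton_poly (a j)))"
  unfolding pullback_set_def msum_def by auto

lemma poly_space_PF: "poly_space T m = PF (RR ((\<lambda>x. real m *\<^sub>R x) ` T))"
  unfolding poly_space_def PF_def by blast

lemma mv_poly_map: "monomial_val (poly_map a z) \<beta> = (\<Prod>j\<in>UNIV. poly_fun (a j) z ^ (\<beta>$j))"
  unfolding monomial_val_def poly_map_def by simp

lemma convex_orthant: "convex nonneg_orthant"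
  unfolding convex_def nonneg_orthant_def by (auto intro!: add_nonneg_nonneg mult_nonneg_nonneg)

lemma newton_orthant: "newton_poly c \<subseteq> nonneg_orthant"
  unfolding newton_poly_def
  by (rule hull_minimal[where S=convex, OF _ convex_orthant]) (auto simp: nonneg_orthant_def mi_real_def)

lemma compact_pb:
  fixes S :: "(real^'n) set" and N :: "'n \<Rightarrow> (real^'l) set"
  assumes "compact S" "\<And>j. compact (N j)"
  shows "compact (\<Union>x\<in>S. msum UNIV (\<lambda>j. x$j) N)"
proof -
  define D where "D J = {(x, y) | x y. x \<in> S \<and> y \<in> msum J (\<lambda>j. x$j) N}" for J
  have "compact (D J)" if "finite J" for J
    using that
  proof (induction J rule: finite_induct)
    case empty
    have "D {} = S \<times> {0}" unfolding D_def by (auto simp: msum_empty)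
    then show ?case using assms(1) by (simp add: compact_Times)
  next
    case (insert i J)
    let ?f = "\<lambda>p::((real^'n) \<times> (real^'l)) \<times> (real^'l). (fst (fst p), (fst (fst p))$i *\<^sub>R snd p + snd (fst p))"
    have "D (insert i J) = ?f ` (D J \<times> N i)"
    proof (rule set_eqI)
      fix q :: "(real^'n) \<times> (real^'l)"
      obtain x y where q: "q = (x, y)" by (cases q)
      have "q \<in> D (insert i J) \<longleftrightarrow> x \<in> S \<and> y \<in> msum (insert i J) (\<lambda>j. x$j) N"
        unfolding D_def q by simp
      also have "\<dots> \<longleftrightarrow> x \<in> S \<and> (\<exists>s r. s \<in> N i \<and> r \<in> msum J (\<lambda>j. x$j) N \<and> y = x$i *\<^sub>R s + r)"
        using msum_insert[OF insert(1,2), of y "\<lambda>j. x$j" N] by simp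
      also have "\<dots> \<longleftrightarrow> q \<in> ?f ` (D J \<times> N i)"
        unfolding D_def q by (auto simp: image_iff)
      finally show "q \<in> D (insert i J) \<longleftrightarrow> q \<in> ?f ` (D J \<times> N i)" .
    qed
    moreover have "compact (?f ` (D J \<times> N i))"
      by (rule compact_continuous_image) (auto intro!: continuous_intros compact_Times insert(3) assms(2))
    ultimately show ?case by simp
  qed
  then have "compact (snd ` D UNIV)"
    by (intro compact_continuous_image continuous_intros) simp
  moreover have "snd ` D UNIV = (\<Union>x\<in>S. msum UNIV (\<lambda>j. x$j) N)"
    unfolding D_def by force
  ultimately show ?thesis by simp
qed

lemma convex_pb:
  fixes S :: "(real^'n) set" and N :: "'n \<Rightarrow> (real^'l) set"
  assumes "convex S" "S \<subseteq> nonneg_orthant" "\<And>j. convex (N j)"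
  shows "convex (\<Union>x\<in>S. msum UNIV (\<lambda>j. x$j) N)"
  unfolding convex_def
proof (intro ballI allI impI)
  fix y1 y2 and u v :: real
  assume y1: "y1 \<in> (\<Union>x\<in>S. msum UNIV (\<lambda>j. x$j) N)" and y2: "y2 \<in> (\<Union>x\<in>S. msum UNIV (\<lambda>j. x$j) N)"
    and uv0: "0 \<le> u" "0 \<le> v" "u + v = 1"
  have uv: "0 \<le> u \<and> 0 \<le> v \<and> u + v = 1" using uv0 by simp
  obtain x1 s1 where x1: "x1 \<in> S" "\<forall>j. s1 j \<in> N j" "y1 = (\<Sum>j\<in>UNIV. x1$j *\<^sub>R s1 j)"
    using y1 unfolding msum_def by blast
  obtain x2 s2 where x2: "x2 \<in> S" "\<forall>j. s2 j \<in> N j" "y2 = (\<Sum>j\<in>UNIV. x2$j *\<^sub>R s2 j)"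
    using y2 unfolding msum_def by blast
  define x where "x = u *\<^sub>R x1 + v *\<^sub>R x2"
  have xS: "x \<in> S" unfolding x_def using assms(1) x1(1) x2(1) uv by (simp add: convexD)
  have nn1: "0 \<le> x1$j" for j using assms(2) x1(1) unfolding nonneg_orthant_def by auto
  have nn2: "0 \<le> x2$j" for j using assms(2) x2(1) unfolding nonneg_orthant_def by auto
  have xj: "x$j = u * x1$j + v * x2$j" for j unfolding x_def by simp
  define s where "s j = (if x$j = 0 then s1 j else (u * x1$j / x$j) *\<^sub>R s1 j + (v * x2$j / x$j) *\<^sub>R s2 j)" for j
  have sN: "s j \<in> N j" for j
  proof (cases "x$j = 0")
    case True then show ?thesis unfolding s_def using x1(2) by simp
  next
    case False
    have p1: "0 \<le> u * x1$j / x$j" "0 \<le> v * x2$j / x$j"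
      using uv nn1[of j] nn2[of j] xj[of j] by (simp_all add: divide_nonneg_nonneg)
    have p2: "u * x1$j / x$j + v * x2$j / x$j = 1" using False xj[of j] by (simp add: add_divide_distrib[symmetric])
    show ?thesis unfolding s_def using False convexD[OF assms(3) x1(2)[rule_format] x2(2)[rule_format] p1 p2] by simp
  qed
  have tm: "x$j *\<^sub>R s j = u *\<^sub>R (x1$j *\<^sub>R s1 j) + v *\<^sub>R (x2$j *\<^sub>R s2 j)" for j
  proof (cases "x$j = 0")
    case True
    have "u * x1$j \<ge> 0" "v * x2$j \<ge> 0" using uv nn1[of j] nn2[of j] by simp_all
    then have z1: "u * x1$j = 0" and z2: "v * x2$j = 0" using True xj[of j] by linarith+
    have "u *\<^sub>R (x1$j *\<^sub>R s1 j) + v *\<^sub>R (x2$j *\<^sub>R s2 j) = (u * x1$j) *\<^sub>R s1 j + (v * x2$j) *\<^sub>R s2 j"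
      by simp
    also have "\<dots> = 0" unfolding z1 z2 by simp
    finally show ?thesis using True by simp
  next
    case False
    then show ?thesis unfolding s_def by (simp add: scaleR_add_right)
  qed
  have "u *\<^sub>R y1 + v *\<^sub>R y2 = (\<Sum>j\<in>UNIV. x$j *\<^sub>R s j)"
    unfolding x1(3) x2(3) tm by (simp add: scaleR_sum_right sum.distrib)
  then show "u *\<^sub>R y1 + v *\<^sub>R y2 \<in> (\<Union>x\<in>S. msum UNIV (\<lambda>j. x$j) N)"
    using xS sN unfolding msum_def by blast
qed



lemma rat_denom:
  assumes "(q::real) \<in> \<rat>" "0 \<le> q"
  shows "\<exists>d::nat. d > 0 \<and> (\<exists>n::nat. real n = real d * q)"
proof -
  obtain a b where ab: "b > 0" "q = of_int a / of_int b" using Rats_cases'[OF assms(1)] by metis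
  have "of_int a = q * of_int b" using ab by simp
  then have a0: "a \<ge> 0" using assms(2) ab(1)
    by (metis mult_nonneg_nonneg of_int_0_le_iff of_int_less_0_iff not_le less_imp_le)
  have "real (nat a) = real (nat b) * q" using ab a0 by simp
  then show ?thesis using ab(1) by (intro exI[of _ "nat b"]) auto
qed

lemma rat_vec:
  fixes x :: "real^'n"
  assumes "x \<in> rat_points" "\<And>i. 0 \<le> x$i"
  shows "\<exists>m::nat. m > 0 \<and> (\<exists>\<beta>::nat^'n. \<forall>j. real (\<beta>$j) = real m * x$j)"
proof -
  have "\<forall>j. \<exists>d::nat. d > 0 \<and> (\<exists>n::nat. real n = real d * x$j)"
    using rat_denom assms unfolding rat_points_def by blast
  then obtain d n where dn: "\<And>j. d j > (0::nat)" "\<And>j. real (n j :: nat) = real (d j) * x$j" by metis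
  define m where "m = (\<Prod>j\<in>UNIV. d j)"
  define \<beta> where "\<beta> = (\<chi> j. (\<Prod>i\<in>UNIV-{j}. d i) * n j)"
  have "m > 0" unfolding m_def using dn(1) by (simp add: prod_pos)
  moreover have "real (\<beta>$j) = real m * x$j" for j
  proof -
    have "real m = real (d j) * (\<Prod>i\<in>UNIV-{j}. real (d i))"
      unfolding m_def by (simp add: prod.remove[of UNIV j] of_nat_prod)
    then show ?thesis unfolding \<beta>_def using dn(2)[of j] by (simp add: of_nat_prod)
  qed
  ultimately show ?thesis by blast
qed

lemma newton_facts:
  assumes "finite {\<alpha>. c \<alpha> \<noteq> 0}" "{\<alpha>. c \<alpha> \<noteq> 0} \<noteq> {}"
  shows "compact (newton_poly c)" "convex (newton_poly c)" "newton_poly c \<noteq> {}"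
  unfolding newton_poly_def using assms by (simp_all add: finite_imp_compact_convex_hull)

theorem proposition8p1:
  fixes S :: "(real^'n) set"
    and a :: "'n \<Rightarrow> nat^'l \<Rightarrow> complex"
  assumes "compact S" and "convex S" and "S \<subseteq> nonneg_orthant" and "0 \<in> S"
    and "closure (S \<inter> rat_points) = S"
    and "\<And>j. finite {\<alpha>. a j \<alpha> \<noteq> 0}"
    and "\<And>j. {\<alpha>. a j \<alpha> \<noteq> 0} \<noteq> {}"
  defines "adm \<equiv> {T :: (real^'l) set. compact T \<and> convex T \<and> T \<subseteq> nonneg_orthant \<and> 0 \<in> T
      \<and> (\<forall>m. (\<lambda>p. p \<circ> poly_map a) ` poly_space S m \<subseteq> poly_space T m)}"
  shows "pullback_set S a \<in> adm \<and> (\<forall>T\<in>adm. pullback_set S a \<subseteq> T)"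
proof -
  let ?N = "\<lambda>j. newton_poly (a j)"
  note Nf = newton_facts[OF assms(6) assms(7)]
  have pbeq: "pullback_set S a = (\<Union>x\<in>S. msum UNIV (\<lambda>j. x$j) ?N)"
    using pb_iff[of _ S a] by blast
  have comp: "compact (pullback_set S a)"
    unfolding pbeq by (rule compact_pb[OF assms(1) Nf(1)])
  have conv: "convex (pullback_set S a)"
    unfolding pbeq by (rule convex_pb[OF assms(2,3) Nf(2)])
  have orth: "pullback_set S a \<subseteq> nonneg_orthant"
  proof
    fix y assume "y \<in> pullback_set S a"
    then obtain x s where xs: "x \<in> S" "\<forall>j. s j \<in> ?N j" "y = (\<Sum>j\<in>UNIV. x$j *\<^sub>R s j)"
      unfolding pullback_set_def by blast
    have "0 \<le> x$j" for j using xs(1) assms(3) unfolding nonneg_orthant_def by auto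
    moreover have "0 \<le> s j $ i" for i j using xs(2) newton_orthant unfolding nonneg_orthant_def by blast
    ultimately show "y \<in> nonneg_orthant"
      unfolding nonneg_orthant_def xs(3) by (auto intro!: sum_nonneg mult_nonneg_nonneg)
  qed
  have zero: "0 \<in> pullback_set S a"
  proof -
    have "\<forall>j. \<exists>y. y \<in> ?N j" using Nf(3) by blast
    then obtain s where "\<forall>j. s j \<in> ?N j" by metis
    moreover have "(0::real^'l) = (\<Sum>j\<in>UNIV. (0::real^'n)$j *\<^sub>R s j)" by simp
    ultimately show ?thesis unfolding pullback_set_def using assms(4) by blast
  qed
  have fj: "poly_fun (a j) \<in> PF (RR (?N j))" for j
    unfolding PF_def newton_poly_def using assms(6)[of j] by (auto intro!: exI[of _ "a j"] hull_inc)
  have incl: "(\<lambda>p. p \<circ> poly_map a) ` poly_space S m \<subseteq> poly_space (pullback_set S a) m" for m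
  proof
    fix q assume "q \<in> (\<lambda>p. p \<circ> poly_map a) ` poly_space S m"
    then obtain p where p: "p \<in> poly_space S m" "q = p \<circ> poly_map a" by blast
    obtain c where c: "finite {\<alpha>. c \<alpha> \<noteq> 0}" "{\<alpha>. c \<alpha> \<noteq> 0} \<subseteq> RR ((\<lambda>x. real m *\<^sub>R x) ` S)" "p = poly_fun c"
      using p(1) unfolding poly_space_PF PF_def by blast
    have qeq: "q = (\<lambda>z. \<Sum>\<beta>\<in>{\<alpha>. c \<alpha> \<noteq> 0}. c \<beta> * (\<Prod>j\<in>UNIV. poly_fun (a j) z ^ (\<beta>$j)))"
      unfolding p(2) c(3) by (simp add: poly_fun_def mv_poly_map fun_eq_iff)
    have "q \<in> PF (RR ((\<lambda>x. real m *\<^sub>R x) ` pullback_set S a))"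
      unfolding qeq
    proof (rule PF_sum[OF c(1)])
      fix \<beta> assume b: "\<beta> \<in> {\<alpha>. c \<alpha> \<noteq> 0}"
      then obtain x0 where x0: "x0 \<in> S" "mi_real \<beta> = real m *\<^sub>R x0" using c(2) by blast
      have bj: "real (\<beta>$j) = real m * x0$j" for j
        using arg_cong[OF x0(2), of "\<lambda>v. v$j"] by (simp add: mi_real_def)
      have sub: "msum UNIV (\<lambda>j. real (\<beta>$j)) ?N \<subseteq> (\<lambda>x. real m *\<^sub>R x) ` pullback_set S a"
      proof
        fix y assume "y \<in> msum UNIV (\<lambda>j. real (\<beta>$j)) ?N"
        then obtain s where s: "\<forall>j. s j \<in> ?N j" "y = (\<Sum>j\<in>UNIV. real (\<beta>$j) *\<^sub>R s j)"
          unfolding msum_def by blast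
        have "y = real m *\<^sub>R (\<Sum>j\<in>UNIV. x0$j *\<^sub>R s j)"
          unfolding s(2) bj by (simp add: scaleR_sum_right)
        moreover have "(\<Sum>j\<in>UNIV. x0$j *\<^sub>R s j) \<in> pullback_set S a"
          unfolding pullback_set_def using x0(1) s(1) by blast
        ultimately show "y \<in> (\<lambda>x. real m *\<^sub>R x) ` pullback_set S a" by blast
      qed
      have "(\<lambda>z. \<Prod>j\<in>UNIV. poly_fun (a j) z ^ (\<beta>$j)) \<in> PF (RR (msum UNIV (\<lambda>j. real (\<beta>$j)) ?N))"
        by (rule PF_prod[OF _ Nf(2) Nf(3) fj]) simp
      then have "(\<lambda>z. \<Prod>j\<in>UNIV. poly_fun (a j) z ^ (\<beta>$j)) \<in> PF (RR ((\<lambda>x. real m *\<^sub>R x) ` pullback_set S a))"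
        using PF_mono[of "RR (msum UNIV (\<lambda>j. real (\<beta>$j)) ?N)" "RR ((\<lambda>x. real m *\<^sub>R x) ` pullback_set S a)"] sub
        by blast
      then show "(\<lambda>z. c \<beta> * (\<Prod>j\<in>UNIV. poly_fun (a j) z ^ (\<beta>$j))) \<in> PF (RR ((\<lambda>x. real m *\<^sub>R x) ` pullback_set S a))"
        by (rule PF_scale)
    qed
    then show "q \<in> poly_space (pullback_set S a) m" unfolding poly_space_PF .
  qed
  have minimal: "pullback_set S a \<subseteq> T" if T: "T \<in> adm" for T
  proof -
    have Tc: "compact T" "convex T" and Tp: "\<And>m. (\<lambda>p. p \<circ> poly_map a) ` poly_space S m \<subseteq> poly_space T m"
      using T unfolding adm_def by blast+
    have ratc: "msum UNIV (\<lambda>j. x$j) ?N \<subseteq> T" if x: "x \<in> S" "x \<in> rat_points" for x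
    proof -
      have "\<And>i. 0 \<le> x$i" using x(1) assms(3) unfolding nonneg_orthant_def by auto
      then obtain m \<beta> where m: "m > (0::nat)" and \<beta>: "\<And>j. real (\<beta>$j) = real m * x$j"
        using rat_vec[OF x(2)] by metis
      have mi: "mi_real \<beta> = real m *\<^sub>R x" unfolding mi_real_def by (simp add: vec_eq_iff \<beta>)
      have "(\<lambda>z. \<Sum>\<gamma>\<in>{\<beta>}. 1 * monomial_val z \<gamma>) \<in> PF (RR ((\<lambda>x. real m *\<^sub>R x) ` S))"
        by (rule PF_group) (use mi x(1) in auto)
      then have "(\<lambda>z. monomial_val z \<beta>) \<in> poly_space S m" unfolding poly_space_PF by simp
      then have "(\<lambda>z. monomial_val z \<beta>) \<circ> poly_map a \<in> poly_space T m" using Tp by blast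
      then have "(\<lambda>z. \<Prod>j\<in>UNIV. poly_fun (a j) z ^ (\<beta>$j)) \<in> PF (RR ((\<lambda>x. real m *\<^sub>R x) ` T))"
        unfolding poly_space_PF by (simp add: o_def mv_poly_map)
      then have K: "msum UNIV (\<lambda>j. real (\<beta>$j)) ?N \<subseteq> (\<lambda>x. real m *\<^sub>R x) ` T"
        by (rule main_lemma[OF assms(6,7) convex_scaling[OF Tc(2)]])
      show ?thesis
      proof
        fix y assume "y \<in> msum UNIV (\<lambda>j. x$j) ?N"
        then obtain s where s: "\<forall>j. s j \<in> ?N j" "y = (\<Sum>j\<in>UNIV. x$j *\<^sub>R s j)"
          unfolding msum_def by blast
        have "real m *\<^sub>R y = (\<Sum>j\<in>UNIV. real (\<beta>$j) *\<^sub>R s j)"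
          unfolding s(2) \<beta> by (simp add: scaleR_sum_right)
        then have "real m *\<^sub>R y \<in> msum UNIV (\<lambda>j. real (\<beta>$j)) ?N"
          unfolding msum_def using s(1) by blast
        then obtain t where t: "t \<in> T" "real m *\<^sub>R y = real m *\<^sub>R t" using K by blast
        then have "y = t" using m by simp
        then show "y \<in> T" using t by simp
      qed
    qed
    show ?thesis
    proof
      fix y assume "y \<in> pullback_set S a"
      then obtain x s where xs: "x \<in> S" "\<forall>j. s j \<in> ?N j" "y = (\<Sum>j\<in>UNIV. x$j *\<^sub>R s j)"
        unfolding pullback_set_def by blast
      have "x \<in> closure (S \<inter> rat_points)" using xs(1) assms(5) by simp
      then obtain X where X: "\<And>n. X n \<in> S \<inter> rat_points" "X \<longlonglongrightarrow> x"
        unfolding closure_sequential by blast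
      have inT: "(\<Sum>j\<in>UNIV. X n $j *\<^sub>R s j) \<in> T" for n
      proof -
        have "(\<Sum>j\<in>UNIV. X n $j *\<^sub>R s j) \<in> msum UNIV (\<lambda>j. X n $j) ?N"
          unfolding msum_def using xs(2) by blast
        then show ?thesis using ratc[of "X n"] X(1)[of n] by blast
      qed
      have "(\<lambda>n. \<Sum>j\<in>UNIV. X n $j *\<^sub>R s j) \<longlonglongrightarrow> (\<Sum>j\<in>UNIV. x$j *\<^sub>R s j)"
        by (intro tendsto_intros X(2))
      then show "y \<in> T" unfolding xs(3)
        by (rule closed_sequentially[OF compact_imp_closed[OF Tc(1)] inT])
    qed
  qed
  show ?thesis
    unfolding adm_def using comp conv orth zero incl minimal[unfolded adm_def] by blast
qed

end
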